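(* Let $0<\alpha<1$, $\sigma=1-\alpha/2$, $l,T>0$, $N,M\ge1$, $h=l/N$, $x_i=ih$, $\tau=T/M$, $t_j=j\tau$, $t_{j+\sigma}=(j+\sigma)\tau$. Let $k(x,t)\ge c_1>0$, $q(x,t)\ge0$ and $f(x,t)$ be continuous on $[0,l]\times[0,T]$, and $u_0$ a function on $[0,l]$. Set $a_i^{j+1}=k(x_{i-1/2},t_{j+\sigma})$, $d_i^{j+1}=q(x_i,t_{j+\sigma})$, $\varphi_i^{j+1}=f(x_i,t_{j+\sigma})$ with $x_{i-1/2}=(i-1/2)h$, and $$(\Lambda y)_i=\frac{a_{i+1}^{j+1}y_{i+1}-(a_{i+1}^{j+1}+a_i^{j+1})y_i+a_i^{j+1}y_{i-1}}{h^2}-d_i^{j+1}y_i .$$ Let $y$ solve $$\Delta^\alpha_{0t_{j+\sigma}}y_i=(\Lambda y^{(\sigma)})_i+\varphi_i^{j+1},\quad i=1,\dots,N-1,\ j=0,\dots,M-1,$$ $$y_0^j=y_N^j=0,\qquad y_i^0=u_0(x_i),$$ where $y^{(\sigma)}=\sigma y^{j+1}+(1-\sigma)y^j$. Then the scheme is unconditionally stable and for every $j=0,\dots,M-1$ $$\|y^{j+1}\|_0^2\le\|y^0\|_0^2+\frac{l^2T^\alpha\Gamma(1-\alpha)}{4c_1}\max_{1\le j\le M}\|\varphi^j\|_0^2 .$$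
   Context: $(y,v)=\sum_{i=1}^{N-1}y_iv_ih$, $\|y\|_0^2=(y,y)$. The discrete fractional derivative is $\Delta^\alpha_{0t_{j+\sigma}}y_i=\frac{\tau^{1-\alpha}}{\Gamma(2-\alpha)}\sum_{s=0}^{j}c_{j-s}\frac{y_i^{s+1}-y_i^s}{\tau}$ with: $a_0=\sigma^{1-\alpha}$, $a_l=(l'+\sigma)^{1-\alpha}-(l'-1+\sigma)^{1-\alpha}$ for index $l'\ge1$, $b_{l'}=\frac{1}{2-\alpha}[(l'+\sigma)^{2-\alpha}-(l'-1+\sigma)^{2-\alpha}]-\frac12[(l'+\sigma)^{1-\alpha}+(l'-1+\sigma)^{1-\alpha}]$ for $l'\ge1$; for $j=0$, $c_0=a_0$; for $j\ge1$, $c_0=a_0+b_1$, $c_s=a_s+b_{s+1}-b_s$ ($1\le s\le j-1$), $c_j=a_j-b_j$. *)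

theory Defs
  imports "HOL-Analysis.Analysis"
begin

text \<open>Coefficients of the L2-1_sigma discrete Caputo derivative.\<close>

definition frac_a :: "real \<Rightarrow> real \<Rightarrow> nat \<Rightarrow> real" where
  "frac_a \<alpha> \<sigma> n = (if n = 0 then \<sigma> powr (1 - \<alpha>)
      else (real n + \<sigma>) powr (1 - \<alpha>) - (real n - 1 + \<sigma>) powr (1 - \<alpha>))"

definition frac_b :: "real \<Rightarrow> real \<Rightarrow> nat \<Rightarrow> real" where
  "frac_b \<alpha> \<sigma> n =
     1 / (2 - \<alpha>) * ((real n + \<sigma>) powr (2 - \<alpha>) - (real n - 1 + \<sigma>) powr (2 - \<alpha>))
     - 1 / 2 * ((real n + \<sigma>) powr (1 - \<alpha>) + (real n - 1 + \<sigma>) powr (1 - \<alpha>))"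

definition frac_c :: "real \<Rightarrow> real \<Rightarrow> nat \<Rightarrow> nat \<Rightarrow> real" where
  "frac_c \<alpha> \<sigma> j s =
     (if j = 0 then frac_a \<alpha> \<sigma> 0
      else if s = 0 then frac_a \<alpha> \<sigma> 0 + frac_b \<alpha> \<sigma> 1
      else if s < j then frac_a \<alpha> \<sigma> s + frac_b \<alpha> \<sigma> (s + 1) - frac_b \<alpha> \<sigma> s
      else if s = j then frac_a \<alpha> \<sigma> j - frac_b \<alpha> \<sigma> j
      else 0)"

text \<open>Discrete fractional derivative at t_{j+sigma}; y j i is the grid value y_i^j.\<close>
definition frac_deriv :: "real \<Rightarrow> real \<Rightarrow> real \<Rightarrow> (nat \<Rightarrow> nat \<Rightarrow> real) \<Rightarrow> nat \<Rightarrow> nat \<Rightarrow> real" where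
  "frac_deriv \<alpha> \<sigma> \<tau> y j i =
     \<tau> powr (1 - \<alpha>) / Gamma (2 - \<alpha>) *
     (\<Sum>s = 0..j. frac_c \<alpha> \<sigma> j (j - s) * (y (s + 1) i - y s i) / \<tau>)"

definition grid_inner :: "nat \<Rightarrow> real \<Rightarrow> (nat \<Rightarrow> real) \<Rightarrow> (nat \<Rightarrow> real) \<Rightarrow> real" where
  "grid_inner N h y v = (\<Sum>i = 1..N - 1. y i * v i * h)"

definition grid_norm0_sq :: "nat \<Rightarrow> real \<Rightarrow> (nat \<Rightarrow> real) \<Rightarrow> real" where
  "grid_norm0_sq N h y = grid_inner N h y y"

definition Lambda_op :: "real \<Rightarrow> (nat \<Rightarrow> real) \<Rightarrow> (nat \<Rightarrow> real) \<Rightarrow> (nat \<Rightarrow> real) \<Rightarrow> nat \<Rightarrow> real" where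
  "Lambda_op h a d y i =
     (a (i + 1) * y (i + 1) - (a (i + 1) + a i) * y i + a i * y (i - 1)) / h^2 - d i * y i"

end

theory Submission
  imports Defs
begin


definition FF :: "real \<Rightarrow> real \<Rightarrow> real" where "FF \<alpha> x = x powr (1-\<alpha>)"
definition GG :: "real \<Rightarrow> real \<Rightarrow> real" where "GG \<alpha> x = x powr (2-\<alpha>) / (2-\<alpha>)"
definition WW :: "real \<Rightarrow> real \<Rightarrow> real" where "WW \<alpha> x = (1-\<alpha>) * x powr (-\<alpha>)"
definition W2 :: "real \<Rightarrow> real \<Rightarrow> real" where "W2 \<alpha> x = (1-\<alpha>) * (-\<alpha>) * x powr (-\<alpha>-1)"

lemma DF: "x > 0 \<Longrightarrow> (FF \<alpha> has_real_derivative WW \<alpha> x) (at x)"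
  unfolding FF_def WW_def using has_real_derivative_powr[of x "1-\<alpha>"] by simp

lemma DG: "x > 0 \<Longrightarrow> \<alpha> < 1 \<Longrightarrow> (GG \<alpha> has_real_derivative FF \<alpha> x) (at x)"
proof -
  assume x: "x > 0" and a: "\<alpha> < 1"
  have "((\<lambda>x. x powr (2-\<alpha>) / (2-\<alpha>)) has_real_derivative ((2-\<alpha>) * x powr (2-\<alpha>-1)) / (2-\<alpha>)) (at x)"
    using has_real_derivative_powr[OF x, of "2-\<alpha>"] by (intro DERIV_cdivide)
  moreover have "((2-\<alpha>) * x powr (2-\<alpha>-1)) / (2-\<alpha>) = FF \<alpha> x" using a
    by (simp add: FF_def)
  ultimately show ?thesis unfolding GG_def by (metis (no_types) ext)
qed

lemma DW: "x > 0 \<Longrightarrow> (WW \<alpha> has_real_derivative W2 \<alpha> x) (at x)"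
proof -
  assume x: "x > 0"
  have "((\<lambda>x. (1-\<alpha>) * x powr (-\<alpha>)) has_real_derivative (1-\<alpha>) * ((-\<alpha>) * x powr (-\<alpha>-1))) (at x)"
    using has_real_derivative_powr[OF x, of "-\<alpha>"] by (intro DERIV_cmult)
  then show ?thesis unfolding WW_def W2_def by (simp add: mult.assoc)
qed

lemma incr_by_deriv:
  fixes g g' :: "real \<Rightarrow> real"
  assumes "a \<le> b" "\<And>x. a \<le> x \<Longrightarrow> x \<le> b \<Longrightarrow> (g has_real_derivative g' x) (at x)"
    "\<And>x. a \<le> x \<Longrightarrow> x \<le> b \<Longrightarrow> 0 \<le> g' x"
  shows "g a \<le> g b"
  using DERIV_nonneg_imp_nondecreasing[of a b g] assms by blast

lemma FF_mono: "0 \<le> x \<Longrightarrow> x \<le> y \<Longrightarrow> \<alpha> < 1 \<Longrightarrow> FF \<alpha> x \<le> FF \<alpha> y"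
  unfolding FF_def by (intro powr_mono2) auto

lemma WW_anti: "0 < x \<Longrightarrow> x \<le> y \<Longrightarrow> 0 < \<alpha> \<Longrightarrow> \<alpha> < 1 \<Longrightarrow> WW \<alpha> y \<le> WW \<alpha> x"
  unfolding WW_def by (intro mult_left_mono powr_mono2') auto

lemma W2_mono: "0 < x \<Longrightarrow> x \<le> y \<Longrightarrow> 0 < \<alpha> \<Longrightarrow> \<alpha> < 1 \<Longrightarrow> W2 \<alpha> x \<le> W2 \<alpha> y"
  unfolding W2_def by (intro mult_left_mono_neg powr_mono2') (auto simp: mult_nonneg_nonpos)

lemma FF_diff_bounds:
  assumes "0 < x" "x \<le> y" "0 < \<alpha>" "\<alpha> < 1"
  shows "(y - x) * WW \<alpha> y \<le> FF \<alpha> y - FF \<alpha> x" "FF \<alpha> y - FF \<alpha> x \<le> (y - x) * WW \<alpha> x"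
proof -
  have "(\<lambda>z. FF \<alpha> z - z * WW \<alpha> y) x \<le> (\<lambda>z. FF \<alpha> z - z * WW \<alpha> y) y"
    proof (rule incr_by_deriv[of x y "\<lambda>z. FF \<alpha> z - z * WW \<alpha> y" "\<lambda>z. WW \<alpha> z - WW \<alpha> y"])
      fix z assume z: "x \<le> z" "z \<le> y"
      show "((\<lambda>z. FF \<alpha> z - z * WW \<alpha> y) has_real_derivative (\<lambda>z. WW \<alpha> z - WW \<alpha> y) z) (at z)"
        using assms z by (auto intro!: derivative_eq_intros DF)
      show "0 \<le> (\<lambda>z. WW \<alpha> z - WW \<alpha> y) z" using assms z by (auto intro: WW_anti)
    qed (use assms in auto)
  then show "(y - x) * WW \<alpha> y \<le> FF \<alpha> y - FF \<alpha> x" by (simp add: algebra_simps)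
  have "(\<lambda>z. z * WW \<alpha> x - FF \<alpha> z) x \<le> (\<lambda>z. z * WW \<alpha> x - FF \<alpha> z) y"
    proof (rule incr_by_deriv[of x y "\<lambda>z. z * WW \<alpha> x - FF \<alpha> z" "\<lambda>z. WW \<alpha> x - WW \<alpha> z"])
      fix z assume z: "x \<le> z" "z \<le> y"
      show "((\<lambda>z. z * WW \<alpha> x - FF \<alpha> z) has_real_derivative (\<lambda>z. WW \<alpha> x - WW \<alpha> z) z) (at z)"
        using assms z by (auto intro!: derivative_eq_intros DF)
      show "0 \<le> (\<lambda>z. WW \<alpha> x - WW \<alpha> z) z" using assms z by (auto intro: WW_anti)
    qed (use assms in auto)
  then show "FF \<alpha> y - FF \<alpha> x \<le> (y - x) * WW \<alpha> x" by (simp add: algebra_simps)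
qed

lemma GG_diff_bounds:
  assumes "0 < x" "x \<le> y" "0 < \<alpha>" "\<alpha> < 1"
  shows "(y - x) * FF \<alpha> x \<le> GG \<alpha> y - GG \<alpha> x" "GG \<alpha> y - GG \<alpha> x \<le> (y - x) * FF \<alpha> y"
proof -
  have "(\<lambda>z. GG \<alpha> z - z * FF \<alpha> x) x \<le> (\<lambda>z. GG \<alpha> z - z * FF \<alpha> x) y"
    proof (rule incr_by_deriv[of x y "\<lambda>z. GG \<alpha> z - z * FF \<alpha> x" "\<lambda>z. FF \<alpha> z - FF \<alpha> x"])
      fix z assume z: "x \<le> z" "z \<le> y"
      show "((\<lambda>z. GG \<alpha> z - z * FF \<alpha> x) has_real_derivative (\<lambda>z. FF \<alpha> z - FF \<alpha> x) z) (at z)"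
        using assms z by (auto intro!: derivative_eq_intros DG)
      show "0 \<le> (\<lambda>z. FF \<alpha> z - FF \<alpha> x) z" using assms z by (auto intro: FF_mono)
    qed (use assms in auto)
  then show "(y - x) * FF \<alpha> x \<le> GG \<alpha> y - GG \<alpha> x" by (simp add: algebra_simps)
  have "(\<lambda>z. z * FF \<alpha> y - GG \<alpha> z) x \<le> (\<lambda>z. z * FF \<alpha> y - GG \<alpha> z) y"
    proof (rule incr_by_deriv[of x y "\<lambda>z. z * FF \<alpha> y - GG \<alpha> z" "\<lambda>z. FF \<alpha> y - FF \<alpha> z"])
      fix z assume z: "x \<le> z" "z \<le> y"
      show "((\<lambda>z. z * FF \<alpha> y - GG \<alpha> z) has_real_derivative (\<lambda>z. FF \<alpha> y - FF \<alpha> z) z) (at z)"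
        using assms z by (auto intro!: derivative_eq_intros DG)
      show "0 \<le> (\<lambda>z. FF \<alpha> y - FF \<alpha> z) z" using assms z by (auto intro: FF_mono)
    qed (use assms in auto)
  then show "GG \<alpha> y - GG \<alpha> x \<le> (y - x) * FF \<alpha> y" by (simp add: algebra_simps)
qed

lemma WW_diff_bounds:
  assumes "0 < x" "x \<le> y" "0 < \<alpha>" "\<alpha> < 1"
  shows "(y - x) * W2 \<alpha> x \<le> WW \<alpha> y - WW \<alpha> x" "WW \<alpha> y - WW \<alpha> x \<le> (y - x) * W2 \<alpha> y"
proof -
  have "(\<lambda>z. WW \<alpha> z - z * W2 \<alpha> x) x \<le> (\<lambda>z. WW \<alpha> z - z * W2 \<alpha> x) y"
    proof (rule incr_by_deriv[of x y "\<lambda>z. WW \<alpha> z - z * W2 \<alpha> x" "\<lambda>z. W2 \<alpha> z - W2 \<alpha> x"])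
      fix z assume z: "x \<le> z" "z \<le> y"
      show "((\<lambda>z. WW \<alpha> z - z * W2 \<alpha> x) has_real_derivative (\<lambda>z. W2 \<alpha> z - W2 \<alpha> x) z) (at z)"
        using assms z by (auto intro!: derivative_eq_intros DW)
      show "0 \<le> (\<lambda>z. W2 \<alpha> z - W2 \<alpha> x) z" using assms z by (auto intro: W2_mono)
    qed (use assms in auto)
  then show "(y - x) * W2 \<alpha> x \<le> WW \<alpha> y - WW \<alpha> x" by (simp add: algebra_simps)
  have "(\<lambda>z. z * W2 \<alpha> y - WW \<alpha> z) x \<le> (\<lambda>z. z * W2 \<alpha> y - WW \<alpha> z) y"
    proof (rule incr_by_deriv[of x y "\<lambda>z. z * W2 \<alpha> y - WW \<alpha> z" "\<lambda>z. W2 \<alpha> y - W2 \<alpha> z"])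
      fix z assume z: "x \<le> z" "z \<le> y"
      show "((\<lambda>z. z * W2 \<alpha> y - WW \<alpha> z) has_real_derivative (\<lambda>z. W2 \<alpha> y - W2 \<alpha> z) z) (at z)"
        using assms z by (auto intro!: derivative_eq_intros DW)
      show "0 \<le> (\<lambda>z. W2 \<alpha> y - W2 \<alpha> z) z" using assms z by (auto intro: W2_mono)
    qed (use assms in auto)
  then show "WW \<alpha> y - WW \<alpha> x \<le> (y - x) * W2 \<alpha> y" by (simp add: algebra_simps)
qed


lemma DFe: "(g has_real_derivative g') (at z) \<Longrightarrow> g z > 0 \<Longrightarrow> D = WW \<alpha> (g z) * g' \<Longrightarrow>
   ((\<lambda>z. FF \<alpha> (g z)) has_real_derivative D) (at z)"
  using DERIV_chain2[OF DF] by blast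

lemma DGe: "(g has_real_derivative g') (at z) \<Longrightarrow> g z > 0 \<Longrightarrow> \<alpha> < 1 \<Longrightarrow> D = FF \<alpha> (g z) * g' \<Longrightarrow>
   ((\<lambda>z. GG \<alpha> (g z)) has_real_derivative D) (at z)"
  using DERIV_chain2[OF DG] by blast

definition KK :: "real \<Rightarrow> real \<Rightarrow> real" where
  "KK \<alpha> x = FF \<alpha> x - FF \<alpha> (x-1) + GG \<alpha> (x+1) - 2*GG \<alpha> x + GG \<alpha> (x-1) - FF \<alpha> (x+1)/2 + FF \<alpha> (x-1)/2"

definition KD :: "real \<Rightarrow> real \<Rightarrow> real" where
  "KD \<alpha> z = WW \<alpha> z - WW \<alpha> (z-1) + FF \<alpha> (z+1) - 2*FF \<alpha> z + FF \<alpha> (z-1) - WW \<alpha> (z+1)/2 + WW \<alpha> (z-1)/2"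

lemma KK_deriv: "z - 1 > 0 \<Longrightarrow> \<alpha> < 1 \<Longrightarrow> (KK \<alpha> has_real_derivative KD \<alpha> z) (at z)"
proof -
  assume z: "z - 1 > 0" and a: "\<alpha> < 1"
  have "((\<lambda>z. FF \<alpha> z - FF \<alpha> (z-1) + GG \<alpha> (z+1) - 2*GG \<alpha> z + GG \<alpha> (z-1) - FF \<alpha> (z+1)/2 + FF \<alpha> (z-1)/2)
     has_real_derivative (WW \<alpha> z * 1 - WW \<alpha> (z-1) * 1 + FF \<alpha> (z+1) * 1 - 2 * (FF \<alpha> z * 1) + FF \<alpha> (z-1) * 1 - WW \<alpha> (z+1) * 1 / 2 + WW \<alpha> (z-1) * 1 / 2)) (at z)"
    using z a
    by (intro DERIV_add DERIV_diff DERIV_cmult DERIV_cdivide DFe[OF DERIV_ident] DGe[OF DERIV_ident]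
        DFe[OF DERIV_add[OF DERIV_ident DERIV_const]] DGe[OF DERIV_add[OF DERIV_ident DERIV_const]]
        DFe[OF DERIV_diff[OF DERIV_ident DERIV_const]] DGe[OF DERIV_diff[OF DERIV_ident DERIV_const]]) auto
  moreover have "KK \<alpha> = (\<lambda>z. FF \<alpha> z - FF \<alpha> (z-1) + GG \<alpha> (z+1) - 2*GG \<alpha> z + GG \<alpha> (z-1) - FF \<alpha> (z+1)/2 + FF \<alpha> (z-1)/2)"
    by (rule ext) (simp add: KK_def)
  moreover have "KD \<alpha> z = (WW \<alpha> z * 1 - WW \<alpha> (z-1) * 1 + FF \<alpha> (z+1) * 1 - 2 * (FF \<alpha> z * 1) + FF \<alpha> (z-1) * 1 - WW \<alpha> (z+1) * 1 / 2 + WW \<alpha> (z-1) * 1 / 2)"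
    by (simp add: KD_def)
  ultimately show ?thesis by simp
qed

lemma KD_nonpos: assumes "z - 1 > 0" "0 < \<alpha>" "\<alpha> < 1" shows "KD \<alpha> z \<le> 0"
proof -
  have a: "FF \<alpha> (z+1) - FF \<alpha> z \<le> WW \<alpha> z" using FF_diff_bounds(2)[of z "z+1" \<alpha>] assms by simp
  have b: "WW \<alpha> z \<le> FF \<alpha> z - FF \<alpha> (z-1)" using FF_diff_bounds(1)[of "z-1" z \<alpha>] assms by simp
  have c: "W2 \<alpha> z \<le> WW \<alpha> (z+1) - WW \<alpha> z" using WW_diff_bounds(1)[of z "z+1" \<alpha>] assms by simp
  have d: "WW \<alpha> z - WW \<alpha> (z-1) \<le> W2 \<alpha> z" using WW_diff_bounds(2)[of "z-1" z \<alpha>] assms by simp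
  show ?thesis using a b c d unfolding KD_def by linarith
qed

lemma KK_anti: assumes "x - 1 > 0" "0 < \<alpha>" "\<alpha> < 1" shows "KK \<alpha> (x+1) \<le> KK \<alpha> x"
proof -
  have "(\<lambda>z. - KK \<alpha> z) x \<le> (\<lambda>z. - KK \<alpha> z) (x+1)"
  proof (rule incr_by_deriv[of x "x+1" "\<lambda>z. - KK \<alpha> z" "\<lambda>z. - KD \<alpha> z"])
    fix z assume z: "x \<le> z" "z \<le> x + 1"
    show "((\<lambda>z. - KK \<alpha> z) has_real_derivative - KD \<alpha> z) (at z)"
      using KK_deriv[of z \<alpha>] assms z by (auto intro: DERIV_minus)
    show "0 \<le> - KD \<alpha> z" using KD_nonpos[of z \<alpha>] assms z by simp
  qed simp
  then show ?thesis by simp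
qed


definition LL :: "real \<Rightarrow> real \<Rightarrow> real" where
  "LL \<alpha> y = 3/2 * FF \<alpha> y - FF \<alpha> (y-1)/2 - GG \<alpha> y + GG \<alpha> (y-1)"

lemma frac_a_eq: "1 \<le> n \<Longrightarrow> frac_a \<alpha> \<sigma> n = FF \<alpha> (real n + \<sigma>) - FF \<alpha> (real n + \<sigma> - 1)"
  by (simp add: frac_a_def FF_def algebra_simps)

lemma frac_a0: "frac_a \<alpha> \<sigma> 0 = FF \<alpha> \<sigma>"
  by (simp add: frac_a_def FF_def)

lemma frac_b_eq: "frac_b \<alpha> \<sigma> n = GG \<alpha> (real n + \<sigma>) - GG \<alpha> (real n + \<sigma> - 1)
   - (FF \<alpha> (real n + \<sigma>) + FF \<alpha> (real n + \<sigma> - 1))/2"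
  by (simp add: frac_b_def FF_def GG_def algebra_simps diff_divide_distrib)

lemma c_mid: assumes "1 \<le> m" "m < j" shows "frac_c \<alpha> \<sigma> j m = KK \<alpha> (real m + \<sigma>)"
proof -
  have h1: "real (Suc m) + \<sigma> = (real m + \<sigma>) + 1" "real (Suc m) + \<sigma> - 1 = real m + \<sigma>" by simp_all
  show ?thesis using assms
    unfolding frac_c_def KK_def
    apply (simp add: frac_a_eq frac_b_eq h1 del: of_nat_Suc)
    by (simp add: field_simps)
qed

lemma c_last: assumes "1 \<le> j" shows "frac_c \<alpha> \<sigma> j j = LL \<alpha> (real j + \<sigma>)"
  using assms unfolding frac_c_def LL_def apply (simp add: frac_a_eq frac_b_eq)
  by (simp add: field_simps)

lemma c_first: assumes "1 \<le> j" shows "frac_c \<alpha> \<sigma> j 0 = FF \<alpha> \<sigma> + GG \<alpha> (1+\<sigma>) - GG \<alpha> \<sigma> - (FF \<alpha> (1+\<sigma>) + FF \<alpha> \<sigma>)/2"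
  using assms unfolding frac_c_def by (simp add: frac_a0 frac_b_eq add.commute)

lemma c_one_last: "frac_c \<alpha> \<sigma> 1 1 = LL \<alpha> (1 + \<sigma>)"
  using c_last[of 1 \<alpha> \<sigma>] by (simp add: add.commute)

lemma c_one_mid: "2 \<le> j \<Longrightarrow> frac_c \<alpha> \<sigma> j 1 = KK \<alpha> (1 + \<sigma>)"
  using c_mid[of 1 j \<alpha> \<sigma>] by (simp add: add.commute)

lemma P1: assumes "x - 1 > 0" "0 < \<alpha>" "\<alpha> < 1"
  shows "3/2 * FF \<alpha> x - FF \<alpha> (x-1)/2 - (GG \<alpha> x - GG \<alpha> (x-1)) \<ge> WW \<alpha> x"
proof -
  let ?g = "\<lambda>r. (r - x + 3/2) * FF \<alpha> r - GG \<alpha> r - ((r-x+1)^2/2 + (r-x+1)/2) * WW \<alpha> x"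
  let ?g' = "\<lambda>r. (r - x + 3/2) * (WW \<alpha> r - WW \<alpha> x)"
  have "?g (x-1) \<le> ?g x"
  proof (rule incr_by_deriv[of "x-1" x ?g ?g'])
    fix r assume r: "x - 1 \<le> r" "r \<le> x"
    show "(?g has_real_derivative ?g' r) (at r)"
      using assms r
      by (auto intro!: derivative_eq_intros DFe DGe simp: field_simps power2_eq_square)
    have "WW \<alpha> x \<le> WW \<alpha> r" using WW_anti[of r x \<alpha>] assms r by simp
    then show "0 \<le> ?g' r" using r by simp
  qed simp
  then show ?thesis by (simp add: algebra_simps power2_eq_square)
qed

lemma P2: assumes "x > 0" "0 < \<alpha>" "\<alpha> < 1"
  shows "2 * (FF \<alpha> (x+1) - (GG \<alpha> (x+1) - GG \<alpha> x)) \<le> WW \<alpha> x"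
proof -
  let ?g = "\<lambda>r. - ((r - x) * FF \<alpha> r - GG \<alpha> r + GG \<alpha> x - ((r-x)^2/2) * WW \<alpha> x)"
  let ?g' = "\<lambda>r. (r - x) * (WW \<alpha> x - WW \<alpha> r)"
  have "?g x \<le> ?g (x+1)"
  proof (rule incr_by_deriv[of x "x+1" ?g ?g'])
    fix r assume r: "x \<le> r" "r \<le> x + 1"
    show "(?g has_real_derivative ?g' r) (at r)"
      using assms r
      by (auto intro!: derivative_eq_intros DFe DGe simp: field_simps power2_eq_square)
    have "WW \<alpha> r \<le> WW \<alpha> x" using WW_anti[of x r \<alpha>] assms r by simp
    then show "0 \<le> ?g' r" using r by simp
  qed simp
  then show ?thesis by (simp add: algebra_simps power2_eq_square)
qed

lemma KK_LL: assumes "x - 1 > 0" "0 < \<alpha>" "\<alpha> < 1" shows "LL \<alpha> (x+1) \<le> KK \<alpha> x"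
  using P1[OF assms] P2[of x \<alpha>] assms unfolding KK_def LL_def by simp


lemma FF_split: "x > 0 \<Longrightarrow> FF \<alpha> x = x * x powr (-\<alpha>)"
proof -
  assume x: "x > 0"
  have "x powr (1 + (-\<alpha>)) = x powr 1 * x powr (-\<alpha>)" by (rule powr_add)
  then show ?thesis using x by (simp add: FF_def)
qed

lemma GG_eq: "x > 0 \<Longrightarrow> GG \<alpha> x = x * FF \<alpha> x / (2 - \<alpha>)"
proof -
  assume x: "x > 0"
  have "x powr (1 + (1-\<alpha>)) = x powr 1 * x powr (1-\<alpha>)" by (rule powr_add)
  then show ?thesis using x by (simp add: FF_def GG_def)
qed

lemma coef_key:
  assumes a: "0 < \<alpha>" "\<alpha> < 1" and s: "\<sigma> = 1 - \<alpha>/2" and j: "1 \<le> j"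
  shows "\<sigma>^2 * frac_c \<alpha> \<sigma> j 1 \<le> (2*\<sigma>-1) * frac_c \<alpha> \<sigma> j 0"
    "0 \<le> frac_c \<alpha> \<sigma> j 1" "frac_c \<alpha> \<sigma> j 1 \<le> frac_c \<alpha> \<sigma> j 0"
proof -
  have sp: "\<sigma> > 0" "\<sigma> \<le> 1" "1/2 < \<sigma>" using a s by auto
  have m0: "2 - \<alpha> = 2*\<sigma>" "1 - \<alpha> = 2*\<sigma> - 1" using s by simp_all
  define A where "A = FF \<alpha> \<sigma>"
  define B where "B = FF \<alpha> (1+\<sigma>)"
  define C where "C = FF \<alpha> (2+\<sigma>)"
  have gA: "GG \<alpha> \<sigma> = \<sigma> * A / (2*\<sigma>)" using GG_eq[of \<sigma> \<alpha>] sp A_def m0 by simp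
  have gB: "GG \<alpha> (1+\<sigma>) = (1+\<sigma>) * B / (2*\<sigma>)" using GG_eq[of "1+\<sigma>" \<alpha>] sp B_def m0 by simp
  have gC: "GG \<alpha> (2+\<sigma>) = (2+\<sigma>) * C / (2*\<sigma>)" using GG_eq[of "2+\<sigma>" \<alpha>] sp C_def m0 by simp
  have Bpos: "B > 0" unfolding B_def FF_def using sp by simp
  have alg0: "\<forall>A B::real. A + (1+\<sigma>)*B/(2*\<sigma>) - \<sigma>*A/(2*\<sigma>) - (B+A)/2 = B/(2*\<sigma>)"
    using sp by (auto simp: field_simps)
  have c0: "frac_c \<alpha> \<sigma> j 0 = B/(2*\<sigma>)"
    using c_first[OF j, of \<alpha> \<sigma>] alg0 gA gB by (simp add: A_def[symmetric] B_def[symmetric])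
  have CB: "C - B \<le> (2*\<sigma>-1) * (1+\<sigma>) powr (-\<alpha>)"
    using FF_diff_bounds(2)[of "1+\<sigma>" "2+\<sigma>" \<alpha>] sp a unfolding B_def C_def WW_def by (simp add: m0)
  have BB: "B = (1+\<sigma>) * (1+\<sigma>) powr (-\<alpha>)" using FF_split[of "1+\<sigma>" \<alpha>] sp B_def by simp
  have BC: "B \<le> C" unfolding B_def C_def using FF_mono[of "1+\<sigma>" "2+\<sigma>" \<alpha>] sp a by simp
  have c1: "frac_c \<alpha> \<sigma> j 1 = (2*\<sigma>-1)*B/(2*\<sigma>) \<or> frac_c \<alpha> \<sigma> j 1 = 2*(C-B)/(2*\<sigma>)"
  proof (cases "j = 1")
    case True
    have alg1: "\<forall>A B::real. 3/2*B - A/2 - (1+\<sigma>)*B/(2*\<sigma>) + \<sigma>*A/(2*\<sigma>) = (2*\<sigma>-1)*B/(2*\<sigma>)"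
      using sp by (auto simp: field_simps)
    have "frac_c \<alpha> \<sigma> j 1 = 3/2*B - A/2 - (1+\<sigma>)*B/(2*\<sigma>) + \<sigma>*A/(2*\<sigma>)"
      using True c_one_last[of \<alpha> \<sigma>] gA gB unfolding LL_def A_def B_def by simp
    then show ?thesis using alg1 by simp
  next
    case False
    then have j2: "2 \<le> j" using j by simp
    have e: "1+\<sigma>-1 = \<sigma>" "1+\<sigma>+1 = 2+\<sigma>" by simp_all
    have alg2: "\<forall>A B C::real. B - A + (2+\<sigma>)*C/(2*\<sigma>) - 2*((1+\<sigma>)*B/(2*\<sigma>)) + \<sigma>*A/(2*\<sigma>) - C/2 + A/2
       = 2*(C-B)/(2*\<sigma>)"
      using sp by (auto simp: field_simps)
    have "frac_c \<alpha> \<sigma> j 1 = B - A + (2+\<sigma>)*C/(2*\<sigma>) - 2*((1+\<sigma>)*B/(2*\<sigma>)) + \<sigma>*A/(2*\<sigma>) - C/2 + A/2"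
      using c_one_mid[OF j2, of \<alpha> \<sigma>] gA gB gC unfolding KK_def A_def B_def C_def
      by (simp only: e)
    then show ?thesis using alg2 by simp
  qed
  have P: "(1+\<sigma>) powr (-\<alpha>) > 0" using sp by simp
  have m1: "1 - \<alpha> = 2*\<sigma> - 1" "2 - \<alpha> = 2*\<sigma>" using s by simp_all
  show g1: "\<sigma>^2 * frac_c \<alpha> \<sigma> j 1 \<le> (2*\<sigma>-1) * frac_c \<alpha> \<sigma> j 0"
    using c1
  proof
    assume h: "frac_c \<alpha> \<sigma> j 1 = (2*\<sigma>-1)*B/(2*\<sigma>)"
    have "\<sigma>^2 * ((2*\<sigma>-1)*B/(2*\<sigma>)) \<le> 1 * ((2*\<sigma>-1)*B/(2*\<sigma>))"
      using sp a Bpos by (intro mult_right_mono) (auto simp: power_le_one)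
    then show ?thesis using h c0 m1 by simp
  next
    assume h: "frac_c \<alpha> \<sigma> j 1 = 2*(C-B)/(2*\<sigma>)"
    have "\<sigma>^2 * (2*(C-B)/(2*\<sigma>)) = \<sigma> * (C - B)" using m1 sp by (simp add: power2_eq_square)
    also have "\<dots> \<le> \<sigma> * ((2*\<sigma>-1) * (1+\<sigma>) powr (-\<alpha>))" using CB sp by simp
    also have "\<dots> \<le> (2*\<sigma>-1) * B / (2*\<sigma>)"
    proof -
      have "(1-\<sigma>)*(1+2*\<sigma>) \<ge> 0" using sp by (intro mult_nonneg_nonneg) auto
      then have "2*\<sigma>^2 \<le> 1 + \<sigma>" by (simp add: algebra_simps power2_eq_square)
      then have "(2*\<sigma>^2) * ((2*\<sigma>-1) * (1+\<sigma>) powr (-\<alpha>)) \<le> (1+\<sigma>) * ((2*\<sigma>-1) * (1+\<sigma>) powr (-\<alpha>))"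
        using P sp by (intro mult_right_mono) auto
      then show ?thesis using BB sp by (simp add: field_simps power2_eq_square)
    qed
    finally show ?thesis using h c0 m1 by simp
  qed
  show g2: "0 \<le> frac_c \<alpha> \<sigma> j 1" using c1 Bpos BC sp by auto
  have c0p: "0 \<le> frac_c \<alpha> \<sigma> j 0" using c0 Bpos sp by simp
  have "(2*\<sigma>-1) \<le> \<sigma>^2" using zero_le_power2[of "\<sigma>-1"] by (simp add: algebra_simps power2_eq_square)
  then have "(2*\<sigma>-1) * frac_c \<alpha> \<sigma> j 0 \<le> \<sigma>^2 * frac_c \<alpha> \<sigma> j 0" using c0p by (rule mult_right_mono)
  with g1 have "\<sigma>^2 * frac_c \<alpha> \<sigma> j 1 \<le> \<sigma>^2 * frac_c \<alpha> \<sigma> j 0" by linarith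
  then show "frac_c \<alpha> \<sigma> j 1 \<le> frac_c \<alpha> \<sigma> j 0" using sp by simp
qed


lemma coef_last:
  assumes a: "0 < \<alpha>" "\<alpha> < 1" and s: "\<sigma> = 1 - \<alpha>/2"
  shows "(1-\<alpha>) / (2 * (real j + \<sigma>) powr \<alpha>) \<le> frac_c \<alpha> \<sigma> j j"
proof (cases "j = 0")
  case True
  have sp: "\<sigma> > 0" "(1-\<alpha>)/2 \<le> \<sigma>" using a s by auto
  have "frac_c \<alpha> \<sigma> j j = \<sigma> * \<sigma> powr (-\<alpha>)" using True FF_split[of \<sigma> \<alpha>] sp
    by (simp add: frac_c_def frac_a0)
  moreover have "(1-\<alpha>)/2 * \<sigma> powr (-\<alpha>) \<le> \<sigma> * \<sigma> powr (-\<alpha>)"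
    using sp by (intro mult_right_mono) auto
  ultimately show ?thesis using True by (simp add: powr_minus_divide)
next
  case False
  then have j: "1 \<le> j" by simp
  define y where "y = real j + \<sigma>"
  have yp: "y - 1 > 0" using j a s y_def by simp
  have "GG \<alpha> y - GG \<alpha> (y-1) \<le> FF \<alpha> y" using GG_diff_bounds(2)[of "y-1" y \<alpha>] yp a by simp
  moreover have "WW \<alpha> y \<le> FF \<alpha> y - FF \<alpha> (y-1)" using FF_diff_bounds(1)[of "y-1" y \<alpha>] yp a by simp
  ultimately have "WW \<alpha> y / 2 \<le> LL \<alpha> y" unfolding LL_def by simp
  then show ?thesis using c_last[OF j, of \<alpha> \<sigma>] unfolding y_def[symmetric]
    by (simp add: WW_def powr_minus_divide)
qed

lemma coef_mono:
  assumes a: "0 < \<alpha>" "\<alpha> < 1" and s: "\<sigma> = 1 - \<alpha>/2" and mj: "m + 1 \<le> j"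
  shows "frac_c \<alpha> \<sigma> j (m+1) \<le> frac_c \<alpha> \<sigma> j m"
proof -
  have sp: "\<sigma> > 0" using a s by simp
  consider "m = 0" | "1 \<le> m" "m + 1 < j" | "1 \<le> m" "m + 1 = j" using mj by linarith
  then show ?thesis
  proof cases
    case 1 then show ?thesis using coef_key(3)[OF a s, of j] mj by simp
  next
    case 2
    have x: "real m + \<sigma> - 1 > 0" using 2 sp by simp
    have e: "real (m+1) + \<sigma> = (real m + \<sigma>) + 1" by simp
    show ?thesis using 2 c_mid[of m j \<alpha> \<sigma>] c_mid[of "m+1" j \<alpha> \<sigma>] KK_anti[OF x a]
      by (simp only: e; simp)
  next
    case 3
    have x: "real m + \<sigma> - 1 > 0" using 3 sp by simp
    have e: "real j + \<sigma> = (real m + \<sigma>) + 1" using 3 by simp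
    show ?thesis using 3 c_mid[of m j \<alpha> \<sigma>] c_last[of j \<alpha> \<sigma>] KK_LL[OF x a]
      by (simp only: e; simp)
  qed
qed



lemma telescope:
  fixes e \<phi> :: "nat \<Rightarrow> real"
  assumes "\<forall>s\<le>n. m \<le> \<phi> s" "\<forall>s<n. e s \<le> e (Suc s)" "0 \<le> e 0"
  shows "e n * (m - \<phi> (Suc n)) \<le> (\<Sum>s<Suc n. e s * (\<phi> s - \<phi> (Suc s)))"
  using assms
proof (induction n)
  case 0
  then show ?case by (simp add: mult_left_mono)
next
  case (Suc n)
  have IH: "e n * (m - \<phi> (Suc n)) \<le> (\<Sum>s<Suc n. e s * (\<phi> s - \<phi> (Suc s)))"
    using Suc.IH Suc.prems by auto
  have "0 \<le> (e (Suc n) - e n) * (\<phi> (Suc n) - m)"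
    using Suc.prems by (intro mult_nonneg_nonneg) auto
  then show ?case using IH by (simp add: algebra_simps)
qed

lemma energy:
  fixes e v :: "nat \<Rightarrow> real"
  assumes sg: "1/2 \<le> \<sigma>" and e0: "0 \<le> e 0" and mono: "\<forall>s. s+1 < j \<longrightarrow> e s \<le> e (s+1)"
    and key: "1 \<le> j \<Longrightarrow> \<sigma>^2 * e (j-1) \<le> (2*\<sigma>-1) * e j"
  shows "1/2 * (\<Sum>s=0..j. e s * (v (s+1)^2 - v s^2))
      \<le> (\<sigma> * v (j+1) + (1-\<sigma>) * v j) * (\<Sum>s=0..j. e s * (v (s+1) - v s))"
proof -
  define z where "z = \<sigma> * (v (j+1) - v j)"
  define \<phi> where "\<phi> s = (v j - v s)^2/2 + z * (v j - v s)" for s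
  have ident: "(\<sigma> * v (j+1) + (1-\<sigma>) * v j) * (\<Sum>s=0..j. e s * (v (s+1) - v s))
      - 1/2 * (\<Sum>s=0..j. e s * (v (s+1)^2 - v s^2)) = (\<Sum>s=0..j. e s * (\<phi> s - \<phi> (s+1)))"
    unfolding sum_distrib_left sum_subtractf[symmetric]
  proof (rule sum.cong)
    fix x assume "x \<in> {0..j}"
    show "(\<sigma> * v (j + 1) + (1 - \<sigma>) * v j) * (e x * (v (x + 1) - v x)) -
         1 / 2 * (e x * ((v (x + 1))\<^sup>2 - (v x)\<^sup>2)) =
         e x * (\<phi> x - \<phi> (x + 1))"
      unfolding \<phi>_def z_def by (simp add: field_simps power2_eq_square)
  qed simp
  have last: "e j * (\<phi> j - \<phi> (j+1)) = e j * (\<sigma> - 1/2) * (v (j+1) - v j)^2"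
    by (simp add: \<phi>_def z_def field_simps power2_eq_square)
  have "0 \<le> (\<Sum>s=0..j. e s * (\<phi> s - \<phi> (s+1)))"
  proof (cases "j = 0")
    case True
    have "0 \<le> e j * (\<sigma> - 1/2) * (v (j+1) - v j)^2" using True e0 sg by simp
    moreover have "(\<Sum>s=0..j. e s * (\<phi> s - \<phi> (s+1))) = e j * (\<phi> j - \<phi> (j+1))" using True by simp
    ultimately show ?thesis using last by linarith
  next
    case False
    then obtain n where n: "j = Suc n" by (cases j) auto
    have m: "\<forall>s\<le>n. (-(z^2/2)) \<le> \<phi> s"
    proof (intro allI impI)
      fix s
      have "0 \<le> (v j - v s + z)^2/2" by simp
      then show "(-(z^2/2)) \<le> \<phi> s" unfolding \<phi>_def by (simp add: field_simps power2_eq_square)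
    qed
    have mono': "\<forall>s<n. e s \<le> e (Suc s)" using mono n by auto
    have T: "e n * ((-(z^2/2)) - \<phi> (Suc n)) \<le> (\<Sum>s<Suc n. e s * (\<phi> s - \<phi> (Suc s)))"
      by (rule telescope[OF m mono' e0])
    have phij: "\<phi> j = 0" by (simp add: \<phi>_def)
    have split: "(\<Sum>s=0..j. e s * (\<phi> s - \<phi> (s+1))) = (\<Sum>s<Suc n. e s * (\<phi> s - \<phi> (Suc s))) + e j * (\<phi> j - \<phi> (j+1))"
      using n by (simp add: atLeast0AtMost lessThan_Suc_atMost[symmetric])
    have K: "\<sigma>^2 * e n \<le> (2*\<sigma>-1) * e j" using key n by simp
    have "0 \<le> ((2*\<sigma>-1) * e j - \<sigma>^2 * e n) * (v (j+1) - v j)^2 / 2"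
      using K by simp
    also have "\<dots> = e n * ((-(z^2/2)) - 0) + e j * (\<sigma> - 1/2) * (v (j+1) - v j)^2"
      by (simp add: z_def field_simps power2_eq_square)
    finally have F: "0 \<le> e n * ((-(z^2/2)) - 0) + e j * (\<sigma> - 1/2) * (v (j+1) - v j)^2" .
    have T': "e n * ((-(z^2/2)) - 0) \<le> (\<Sum>s<Suc n. e s * (\<phi> s - \<phi> (Suc s)))"
      using T phij n by simp
    show ?thesis using T' split last F by linarith
  qed
  then show ?thesis using ident by simp
qed

lemma abel_bound:
  fixes e v :: "nat \<Rightarrow> real"
  assumes "\<forall>s<j. e s \<le> e (Suc s)" "\<forall>s. 1 \<le> s \<longrightarrow> s \<le> j \<longrightarrow> v s \<le> B"
  shows "e j * v (Suc j) - e 0 * v 0 - (e j - e 0) * B \<le> (\<Sum>s=0..j. e s * (v (Suc s) - v s))"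
  using assms
proof (induction j)
  case 0
  then show ?case by (simp add: algebra_simps)
next
  case (Suc j)
  have IH: "e j * v (Suc j) - e 0 * v 0 - (e j - e 0) * B \<le> (\<Sum>s=0..j. e s * (v (Suc s) - v s))"
    using Suc.IH Suc.prems by auto
  have "(e (Suc j) - e j) * v (Suc j) \<le> (e (Suc j) - e j) * B"
    using Suc.prems by (intro mult_left_mono) auto
  then show ?case using IH by (simp add: algebra_simps)
qed



lemma sbp:
  fixes a w :: "nat \<Rightarrow> real"
  shows "(\<Sum>i=1..n. w i * (a (i+1) * (w (i+1) - w i) - a i * (w i - w (i-1))))
     = w n * a (n+1) * (w (n+1) - w n) - w 0 * a 1 * (w 1 - w 0) - (\<Sum>i=1..n. a i * (w i - w (i-1))^2)"
proof (induction n)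
  case 0
  then show ?case by simp
next
  case (Suc n)
  show ?case using Suc by (simp add: sum.cl_ivl_Suc algebra_simps power2_eq_square)
qed

lemma tele1: "(\<Sum>k=1..i. (w::nat\<Rightarrow>real) k - w (k-1)) = w i - w 0"
  by (induction i) (auto simp: sum.cl_ivl_Suc)

lemma tele2: "i \<le> N \<Longrightarrow> (\<Sum>k=Suc i..N. (w::nat\<Rightarrow>real) k - w (k-1)) = w N - w i"
proof (induction N)
  case 0 then show ?case by simp
next
  case (Suc N)
  show ?case
  proof (cases "i = Suc N")
    case True then show ?thesis by simp
  next
    case False
    then have "i \<le> N" using Suc.prems by simp
    then show ?thesis using Suc.IH by (simp add: sum.cl_ivl_Suc)
  qed
qed

lemma space_energy:
  fixes a d w :: "nat \<Rightarrow> real"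
  assumes N: "1 \<le> N" and w0: "w 0 = 0" and wN: "w N = 0" and h: "h > 0"
    and a: "\<And>i. 1 \<le> i \<Longrightarrow> i \<le> N \<Longrightarrow> c1 \<le> a i"
    and d: "\<And>i. 1 \<le> i \<Longrightarrow> i \<le> N - 1 \<Longrightarrow> 0 \<le> d i"
  shows "(\<Sum>i=1..N-1. w i * Lambda_op h a d w i) \<le> - c1 * (\<Sum>i=1..N. (w i - w (i-1))^2) / h^2"
proof -
  have L: "w i * Lambda_op h a d w i = w i * (a (i+1) * (w (i+1) - w i) - a i * (w i - w (i-1))) / h^2
      - d i * (w i)^2" for i
    by (simp add: Lambda_op_def field_simps power2_eq_square)
  have S1: "(\<Sum>i=1..N-1. w i * (a (i+1) * (w (i+1) - w i) - a i * (w i - w (i-1))))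
      = - (\<Sum>i=1..N. a i * (w i - w (i-1))^2)"
  proof -
    obtain M where M: "N = Suc M" using N by (cases N) auto
    have "(\<Sum>i=1..N. a i * (w i - w (i-1))^2) = (\<Sum>i=1..M. a i * (w i - w (i-1))^2) + a N * (w N - w M)^2"
      using sum.cl_ivl_Suc[of "\<lambda>i. a i * (w i - w (i-1))^2" 1 M] M by simp
    moreover have "(\<Sum>i=1..M. w i * (a (i+1) * (w (i+1) - w i) - a i * (w i - w (i-1))))
     = w M * a N * (w N - w M) - w 0 * a 1 * (w 1 - w 0) - (\<Sum>i=1..M. a i * (w i - w (i-1))^2)"
      using sbp[of w a M] M by simp
    ultimately show ?thesis using w0 wN M by (simp add: power2_eq_square algebra_simps)
  qed
  have S2: "(\<Sum>i=1..N-1. w i * Lambda_op h a d w i)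
     = (\<Sum>i=1..N-1. w i * (a (i+1) * (w (i+1) - w i) - a i * (w i - w (i-1)))) / h^2 - (\<Sum>i=1..N-1. d i * (w i)^2)"
    by (simp add: L sum_subtractf sum_divide_distrib)
  have S3: "0 \<le> (\<Sum>i=1..N-1. d i * (w i)^2)" using d by (intro sum_nonneg) auto
  have S4: "c1 * (\<Sum>i=1..N. (w i - w (i-1))^2) \<le> (\<Sum>i=1..N. a i * (w i - w (i-1))^2)"
    unfolding sum_distrib_left using a by (intro sum_mono mult_right_mono) auto
  have "(\<Sum>i=1..N-1. w i * Lambda_op h a d w i) \<le> - (\<Sum>i=1..N. a i * (w i - w (i-1))^2) / h^2"
    using S1 S2 S3 by simp
  also have "\<dots> \<le> - c1 * (\<Sum>i=1..N. (w i - w (i-1))^2) / h^2"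
    using S4 h by (simp add: divide_right_mono)
  finally show ?thesis .
qed

lemma poincare:
  fixes w :: "nat \<Rightarrow> real"
  assumes N: "1 \<le> N" and w0: "w 0 = 0" and wN: "w N = 0"
  shows "(\<Sum>i=1..N-1. (w i)^2) \<le> (real N)^2/4 * (\<Sum>i=1..N. (w i - w (i-1))^2)"
proof -
  define D where "D = (\<Sum>i=1..N. (w i - w (i-1))^2)"
  have D0: "0 \<le> D" unfolding D_def by (intro sum_nonneg) auto
  have pt: "(w i)^2 \<le> real N / 4 * D" if i: "1 \<le> i" "i \<le> N - 1" for i
  proof -
    define A where "A = (\<Sum>k=1..i. (w k - w (k-1))^2)"
    define B where "B = (\<Sum>k=Suc i..N. (w k - w (k-1))^2)"
    have AB: "A + B = D"
    proof -
      have "{1..N} = {1..i} \<union> {Suc i..N}" using i by auto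
      then show ?thesis unfolding A_def B_def D_def by (simp add: sum.union_disjoint[symmetric] ivl_disj_int)
    qed
    have wa: "(w i)^2 \<le> A * real i"
      using sum_squared_le_sum_of_squares[of "\<lambda>k. w k - w (k-1)" "{1..i}"] tele1[of w i] w0
      unfolding A_def by simp
    have wb: "(w i)^2 \<le> B * real (N - i)"
      using sum_squared_le_sum_of_squares[of "\<lambda>k. w k - w (k-1)" "{Suc i..N}"] tele2[of i N w] wN i
      unfolding B_def by (simp add: power2_eq_square)
    have ri: "real (N - i) = real N - real i" using i by simp
    have "real N * (w i)^2 = (real N - real i) * (w i)^2 + real i * (w i)^2" by (simp add: algebra_simps)
    also have "\<dots> \<le> (real N - real i) * (A * real i) + real i * (B * (real N - real i))"
      using wa wb i ri by (intro add_mono mult_left_mono) auto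
    also have "\<dots> = real i * (real N - real i) * D" unfolding AB[symmetric] by (simp add: algebra_simps)
    also have "\<dots> \<le> (real N)^2/4 * D"
    proof -
      have "real i * (real N - real i) \<le> (real N)^2/4"
        using zero_le_power2[of "real N - 2 * real i"] by (simp add: algebra_simps power2_eq_square)
      then show ?thesis using D0 by (rule mult_right_mono)
    qed
    finally have "real N * (w i)^2 \<le> real N * (real N / 4 * D)" by (simp add: power2_eq_square)
    then show ?thesis using N by simp
  qed
  have "(\<Sum>i=1..N-1. (w i)^2) \<le> (\<Sum>i=1..N-1. real N / 4 * D)" using pt by (intro sum_mono) auto
  also have "\<dots> = real (N-1) * (real N / 4 * D)" by simp
  also have "\<dots> \<le> real N * (real N / 4 * D)" using D0 by (intro mult_right_mono) auto
  finally show ?thesis unfolding D_def by (simp add: power2_eq_square)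
qed



lemma levelA:
  fixes \<alpha> \<sigma> l T cK :: real and N M j :: nat
    and k q f :: "real \<Rightarrow> real \<Rightarrow> real"
    and y :: "nat \<Rightarrow> nat \<Rightarrow> real"
  assumes alpha: "0 < \<alpha>" "\<alpha> < 1"
    and sigma: "\<sigma> = 1 - \<alpha> / 2"
    and lT: "l > 0" "T > 0"
    and NM: "N \<ge> 1" "M \<ge> 1"
    and cK: "cK > 0"
    and k_ge: "\<And>x t. x \<in> {0..l} \<Longrightarrow> t \<in> {0..T} \<Longrightarrow> k x t \<ge> cK"
    and q_ge: "\<And>x t. x \<in> {0..l} \<Longrightarrow> t \<in> {0..T} \<Longrightarrow> q x t \<ge> 0"
    and scheme: "\<And>i. 1 \<le> i \<Longrightarrow> i \<le> N - 1 \<Longrightarrow>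
        frac_deriv \<alpha> \<sigma> (T / M) y j i =
          Lambda_op (l / N)
            (\<lambda>i'. k ((real i' - 1 / 2) * (l / N)) ((real j + \<sigma>) * (T / M)))
            (\<lambda>i'. q (real i' * (l / N)) ((real j + \<sigma>) * (T / M)))
            (\<lambda>i'. \<sigma> * y (j + 1) i' + (1 - \<sigma>) * y j i') i
          + f (real i * (l / N)) ((real j + \<sigma>) * (T / M))"
    and bdry: "\<And>j. j \<le> M \<Longrightarrow> y j 0 = 0 \<and> y j N = 0"
    and j: "j \<le> M - 1"
  shows "(\<Sum>s=0..j. frac_c \<alpha> \<sigma> j (j - s) * (grid_norm0_sq N (l/N) (y (s+1)) - grid_norm0_sq N (l/N) (y s)))
     \<le> (T/M) powr \<alpha> * Gamma (2 - \<alpha>) * l^2 / (8 * cK) *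
        grid_norm0_sq N (l / N) (\<lambda>i. f (real i * (l / N)) ((real j + \<sigma>) * (T / M)))"
proof -
  define h where "h = l / N"
  define \<tau> where "\<tau> = T / M"
  define tj where "tj = (real j + \<sigma>) * \<tau>"
  define a' where "a' = (\<lambda>i'. k ((real i' - 1 / 2) * h) tj)"
  define d' where "d' = (\<lambda>i'. q (real i' * h) tj)"
  define W where "W = (\<lambda>i'. \<sigma> * y (j + 1) i' + (1 - \<sigma>) * y j i')"
  define \<phi> where "\<phi> = (\<lambda>i. f (real i * h) tj)"
  define c where "c = (\<lambda>s. frac_c \<alpha> \<sigma> j (j - s))"
  define S where "S = (\<lambda>i. \<Sum>s=0..j. c s * (y (s+1) i - y s i))"
  define \<kappa> where "\<kappa> = \<tau> powr (1-\<alpha>) / Gamma (2-\<alpha>) / \<tau>"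
  have hp: "h > 0" "\<tau> > 0" using lT NM by (auto simp: h_def \<tau>_def)
  have sp: "1/2 \<le> \<sigma>" "\<sigma> \<le> 1" "0 < \<sigma>" using sigma alpha by auto
  have Nh: "real N * h = l" using NM by (simp add: h_def)
  have tj: "0 \<le> tj" "tj \<le> T"
  proof -
    show "0 \<le> tj" using hp sp by (simp add: tj_def)
    have "real j + \<sigma> \<le> real M" using j NM sp by linarith
    then have "(real j + \<sigma>) * \<tau> \<le> real M * \<tau>" using hp by (intro mult_right_mono) auto
    then show "tj \<le> T" using NM by (simp add: tj_def \<tau>_def)
  qed
  have a_ge: "cK \<le> a' i" if "1 \<le> i" "i \<le> N" for i
  proof -
    have "0 \<le> (real i - 1/2) * h" using that hp by simp
    moreover have "(real i - 1/2) * h \<le> l"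
    proof -
      have "(real i - 1/2) * h \<le> real N * h" using that hp by (intro mult_right_mono) auto
      then show ?thesis using Nh by simp
    qed
    ultimately show ?thesis unfolding a'_def using k_ge tj by auto
  qed
  have d_ge: "0 \<le> d' i" if "1 \<le> i" "i \<le> N - 1" for i
  proof -
    have "real i * h \<le> real N * h" using that hp by (intro mult_right_mono) auto
    then show ?thesis unfolding d'_def using q_ge tj hp Nh by auto
  qed
  have W0: "W 0 = 0" "W N = 0" using bdry[of j] bdry[of "j+1"] j NM by (auto simp: W_def)
  define D where "D = (\<Sum>i=1..N. (W i - W (i-1))^2)"
  have SE: "(\<Sum>i=1..N-1. W i * Lambda_op h a' d' W i) \<le> - cK * D / h^2"
    unfolding D_def using space_energy[of N W h cK a' d'] NM W0 hp a_ge d_ge by auto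
  have PC: "(\<Sum>i=1..N-1. (W i)^2) \<le> (real N)^2/4 * D"
    unfolding D_def using poincare[of N W] NM W0 by auto
  define \<epsilon> where "\<epsilon> = 4 * cK / l^2"
  have ep: "\<epsilon> > 0" using cK lT by (simp add: \<epsilon>_def)
  have WL: "(\<Sum>i=1..N-1. W i * Lambda_op h a' d' W i) \<le> - \<epsilon> * (\<Sum>i=1..N-1. (W i)^2)"
  proof -
    have "\<epsilon> * (\<Sum>i=1..N-1. (W i)^2) \<le> \<epsilon> * ((real N)^2/4 * D)" using PC ep by simp
    also have "\<dots> = cK * D / h^2" using Nh lT hp by (simp add: \<epsilon>_def field_simps power2_eq_square)
    finally show ?thesis using SE by linarith
  qed
  have scheme': "\<kappa> * S i = Lambda_op h a' d' W i + \<phi> i" if "1 \<le> i" "i \<le> N - 1" for i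
  proof -
    have "frac_deriv \<alpha> \<sigma> \<tau> y j i = \<kappa> * S i"
      unfolding frac_deriv_def \<kappa>_def S_def c_def by (simp add: sum_divide_distrib[symmetric])
    then show ?thesis using scheme[OF that]
      unfolding h_def[symmetric] \<tau>_def[symmetric] tj_def[symmetric] a'_def[symmetric] d'_def[symmetric]
        W_def[symmetric] \<phi>_def by simp
  qed
  have kp: "\<kappa> > 0" using hp alpha by (simp add: \<kappa>_def)
  have Egy: "1/2 * (\<Sum>s=0..j. c s * ((y (s+1) i)^2 - (y s i)^2)) \<le> W i * S i" for i
    unfolding W_def S_def
  proof (rule energy)
    show "1/2 \<le> \<sigma>" by (rule sp(1))
    show "0 \<le> c 0" unfolding c_def
      using coef_last[OF alpha sigma, of j] alpha sp by (simp add: order_trans[rotated])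
    show "\<forall>s. s + 1 < j \<longrightarrow> c s \<le> c (s + 1)"
    proof (intro allI impI)
      fix s assume s: "s + 1 < j"
      have "frac_c \<alpha> \<sigma> j ((j - (s+1)) + 1) \<le> frac_c \<alpha> \<sigma> j (j - (s+1))"
        using coef_mono[OF alpha sigma, of "j - (s+1)" j] s by simp
      moreover have "j - (s+1) + 1 = j - s" using s by simp
      ultimately show "c s \<le> c (s+1)" unfolding c_def by simp
    qed
    show "\<sigma>^2 * c (j-1) \<le> (2*\<sigma>-1) * c j" if "1 \<le> j"
      using coef_key(1)[OF alpha sigma that] that unfolding c_def by simp
  qed
  define v where "v = (\<lambda>s. grid_norm0_sq N h (y s))"
  have swap: "(\<Sum>s=0..j. c s * (v (s+1) - v s)) = (\<Sum>i=1..N-1. h * (\<Sum>s=0..j. c s * ((y (s+1) i)^2 - (y s i)^2)))"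
  proof -
    have "(\<Sum>s=0..j. c s * (v (s+1) - v s)) = (\<Sum>s=0..j. \<Sum>i=1..N-1. h * (c s * ((y (s+1) i)^2 - (y s i)^2)))"
      unfolding v_def grid_norm0_sq_def grid_inner_def
      by (rule sum.cong) (simp_all add: sum_distrib_left sum_subtractf[symmetric] algebra_simps power2_eq_square)
    also have "\<dots> = (\<Sum>i=1..N-1. \<Sum>s=0..j. h * (c s * ((y (s+1) i)^2 - (y s i)^2)))"
      by (rule sum.swap)
    also have "\<dots> = (\<Sum>i=1..N-1. h * (\<Sum>s=0..j. c s * ((y (s+1) i)^2 - (y s i)^2)))"
      by (simp add: sum_distrib_left)
    finally show ?thesis .
  qed
  have AMGM: "W i * (Lambda_op h a' d' W i + \<phi> i) \<le> W i * Lambda_op h a' d' W i + \<epsilon> * (W i)^2 + (\<phi> i)^2 / (4*\<epsilon>)" for i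
  proof -
    have "0 \<le> (2*\<epsilon>*W i - \<phi> i)^2 / (4*\<epsilon>)" using ep by simp
    then show ?thesis using ep by (simp add: field_simps power2_eq_square)
  qed
  have "1/2 * (\<Sum>s=0..j. c s * (v (s+1) - v s)) = (\<Sum>i=1..N-1. h * (1/2 * (\<Sum>s=0..j. c s * ((y (s+1) i)^2 - (y s i)^2))))"
    unfolding swap by (simp add: sum_distrib_left algebra_simps)
  also have "\<dots> \<le> (\<Sum>i=1..N-1. h * (W i * S i))"
    using Egy hp by (intro sum_mono mult_left_mono) auto
  also have "\<dots> = (\<Sum>i=1..N-1. h * (W i * (Lambda_op h a' d' W i + \<phi> i))) / \<kappa>"
    unfolding sum_divide_distrib
  proof (rule sum.cong)
    fix i assume "i \<in> {1..N-1}"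
    then have "S i = (Lambda_op h a' d' W i + \<phi> i) / \<kappa>" using scheme' kp by (auto simp: field_simps)
    then show "h * (W i * S i) = h * (W i * (Lambda_op h a' d' W i + \<phi> i)) / \<kappa>" by simp
  qed simp
  also have "\<dots> \<le> (h * (\<Sum>i=1..N-1. (\<phi> i)^2 / (4*\<epsilon>))) / \<kappa>"
  proof -
    have "(\<Sum>i=1..N-1. W i * (Lambda_op h a' d' W i + \<phi> i))
       \<le> (\<Sum>i=1..N-1. W i * Lambda_op h a' d' W i + \<epsilon> * (W i)^2 + (\<phi> i)^2 / (4*\<epsilon>))"
      using AMGM by (intro sum_mono) auto
    also have "\<dots> = (\<Sum>i=1..N-1. W i * Lambda_op h a' d' W i) + \<epsilon> * (\<Sum>i=1..N-1. (W i)^2) + (\<Sum>i=1..N-1. (\<phi> i)^2 / (4*\<epsilon>))"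
      by (simp add: sum.distrib sum_distrib_left)
    also have "\<dots> \<le> (\<Sum>i=1..N-1. (\<phi> i)^2 / (4*\<epsilon>))" using WL by simp
    finally have "(\<Sum>i=1..N-1. h * (W i * (Lambda_op h a' d' W i + \<phi> i))) \<le> h * (\<Sum>i=1..N-1. (\<phi> i)^2 / (4*\<epsilon>))"
      using hp by (simp add: sum_distrib_left[symmetric])
    then show ?thesis using kp by (simp add: divide_right_mono)
  qed
  also have "\<dots> = l^2 / (16 * cK) * grid_norm0_sq N h \<phi> / \<kappa>"
    unfolding grid_norm0_sq_def grid_inner_def \<epsilon>_def
    using cK lT by (simp add: sum_distrib_left sum_divide_distrib field_simps power2_eq_square)
  finally have fin: "1/2 * (\<Sum>s=0..j. c s * (v (s+1) - v s)) \<le> l^2 / (16 * cK) * grid_norm0_sq N h \<phi> / \<kappa>" .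
  have ik: "1 / \<kappa> = \<tau> powr \<alpha> * Gamma (2 - \<alpha>)"
  proof -
    have "\<tau> powr 1 = \<tau> powr (1 - \<alpha>) * \<tau> powr \<alpha>" by (simp add: powr_add[symmetric])
    then have "\<tau> = \<tau> powr (1 - \<alpha>) * \<tau> powr \<alpha>" using hp by simp
    moreover have "Gamma (2 - \<alpha>) > 0" using alpha by simp
    moreover have "\<tau> powr (1 - \<alpha>) > 0" using hp by simp
    ultimately show ?thesis unfolding \<kappa>_def by (simp add: field_simps)
  qed
  have "(\<Sum>s=0..j. c s * (v (s+1) - v s)) \<le> l^2 / (8 * cK) * grid_norm0_sq N h \<phi> * (1 / \<kappa>)"
    using fin by (simp add: field_simps)
  then show ?thesis unfolding ik
    unfolding v_def c_def h_def \<tau>_def \<phi>_def tj_def by (simp add: algebra_simps)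
qed



lemma chain_mono: "\<forall>s<n. e s \<le> e (Suc s) \<Longrightarrow> (e 0::real) \<le> e n"
  by (induction n) (auto intro: order_trans)

theorem theorem3:
  fixes \<alpha> \<sigma> l T c1 :: real and N M :: nat
    and k q f :: "real \<Rightarrow> real \<Rightarrow> real" and u0 :: "real \<Rightarrow> real"
    and y :: "nat \<Rightarrow> nat \<Rightarrow> real"
  assumes alpha: "0 < \<alpha>" "\<alpha> < 1"
    and sigma: "\<sigma> = 1 - \<alpha> / 2"
    and lT: "l > 0" "T > 0"
    and NM: "N \<ge> 1" "M \<ge> 1"
    and c1: "c1 > 0"
    and k_cont: "continuous_on ({0..l} \<times> {0..T}) (\<lambda>(x, t). k x t)"
    and q_cont: "continuous_on ({0..l} \<times> {0..T}) (\<lambda>(x, t). q x t)"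
    and f_cont: "continuous_on ({0..l} \<times> {0..T}) (\<lambda>(x, t). f x t)"
    and k_ge: "\<And>x t. x \<in> {0..l} \<Longrightarrow> t \<in> {0..T} \<Longrightarrow> k x t \<ge> c1"
    and q_ge: "\<And>x t. x \<in> {0..l} \<Longrightarrow> t \<in> {0..T} \<Longrightarrow> q x t \<ge> 0"
    and scheme: "\<And>i j. 1 \<le> i \<Longrightarrow> i \<le> N - 1 \<Longrightarrow> j \<le> M - 1 \<Longrightarrow>
        frac_deriv \<alpha> \<sigma> (T / M) y j i =
          Lambda_op (l / N)
            (\<lambda>i'. k ((real i' - 1 / 2) * (l / N)) ((real j + \<sigma>) * (T / M)))
            (\<lambda>i'. q (real i' * (l / N)) ((real j + \<sigma>) * (T / M)))
            (\<lambda>i'. \<sigma> * y (j + 1) i' + (1 - \<sigma>) * y j i') i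
          + f (real i * (l / N)) ((real j + \<sigma>) * (T / M))"
    and bdry: "\<And>j. j \<le> M \<Longrightarrow> y j 0 = 0 \<and> y j N = 0"
    and init: "\<And>i. i \<le> N \<Longrightarrow> y 0 i = u0 (real i * (l / N))"
  shows "\<forall>j \<le> M - 1.
    grid_norm0_sq N (l / N) (y (j + 1)) \<le>
      grid_norm0_sq N (l / N) (y 0)
      + l^2 * T powr \<alpha> * Gamma (1 - \<alpha>) / (4 * c1) *
        Max ((\<lambda>j'. grid_norm0_sq N (l / N)
                 (\<lambda>i. f (real i * (l / N)) ((real j' - 1 + \<sigma>) * (T / M)))) ` {1..M})"
proof -
  define h where "h = l / N"
  define \<tau> where "\<tau> = T / M"
  define v where "v = (\<lambda>s. grid_norm0_sq N h (y s))"
  define \<Phi> where "\<Phi> = (\<lambda>j'. grid_norm0_sq N h (\<lambda>i. f (real i * h) ((real j' - 1 + \<sigma>) * \<tau>)))"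
  define \<Phi>m where "\<Phi>m = Max (\<Phi> ` {1..M})"
  define R where "R = l^2 * T powr \<alpha> * Gamma (1 - \<alpha>) / (4 * c1) * \<Phi>m"
  have hp: "h > 0" "\<tau> > 0" using lT NM by (auto simp: h_def \<tau>_def)
  have sp: "1/2 \<le> \<sigma>" "\<sigma> \<le> 1" "0 < \<sigma>" using sigma alpha by auto
  have \<Phi>ge: "\<Phi> j' \<le> \<Phi>m" if "j' \<in> {1..M}" for j'
    unfolding \<Phi>m_def using that by (intro Max_ge) auto
  have \<Phi>nn: "0 \<le> \<Phi> j'" for j'
    unfolding \<Phi>_def grid_norm0_sq_def grid_inner_def using hp
    by (intro sum_nonneg) (simp add: mult_nonneg_nonneg)
  have \<Phi>mnn: "0 \<le> \<Phi>m" using \<Phi>ge[of 1] \<Phi>nn[of 1] NM by simp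
  have G1: "Gamma (1 - \<alpha>) > 0" using alpha by simp
  have G2: "Gamma (2 - \<alpha>) = (1 - \<alpha>) * Gamma (1 - \<alpha>)"
  proof -
    have "(1 - \<alpha>) \<notin> \<int>\<^sub>\<le>\<^sub>0" using alpha by (auto elim!: nonpos_Ints_cases)
    then have "Gamma ((1 - \<alpha>) + 1) = (1 - \<alpha>) * Gamma (1 - \<alpha>)" by (rule Gamma_plus1)
    then show ?thesis by (simp add: algebra_simps)
  qed
  have Rnn: "0 \<le> R" unfolding R_def using lT c1 G1 \<Phi>mnn by simp
  have step: "v (j+1) \<le> v 0 + R" if j: "j \<le> M - 1" and hyp: "\<forall>s. 1 \<le> s \<longrightarrow> s \<le> j \<longrightarrow> v s \<le> v 0 + R" for j
  proof -
    define e where "e = (\<lambda>s. frac_c \<alpha> \<sigma> j (j - s))"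
    have emono: "\<forall>s<j. e s \<le> e (Suc s)"
    proof (intro allI impI)
      fix s assume s: "s < j"
      have "frac_c \<alpha> \<sigma> j ((j - Suc s) + 1) \<le> frac_c \<alpha> \<sigma> j (j - Suc s)"
        using coef_mono[OF alpha sigma, of "j - Suc s" j] s by simp
      moreover have "j - Suc s + 1 = j - s" using s by simp
      ultimately show "e s \<le> e (Suc s)" unfolding e_def by simp
    qed
    have ab: "e j * v (Suc j) - e 0 * v 0 - (e j - e 0) * (v 0 + R) \<le> (\<Sum>s=0..j. e s * (v (Suc s) - v s))"
      by (rule abel_bound[OF emono hyp])
    have lev: "(\<Sum>s=0..j. e s * (v (Suc s) - v s)) \<le> \<tau> powr \<alpha> * Gamma (2 - \<alpha>) * l^2 / (8 * c1) * \<Phi> (j+1)"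
    proof -
      have L: "(\<Sum>s=0..j. frac_c \<alpha> \<sigma> j (j - s) * (grid_norm0_sq N (l/N) (y (s+1)) - grid_norm0_sq N (l/N) (y s)))
        \<le> (T/M) powr \<alpha> * Gamma (2 - \<alpha>) * l^2 / (8 * c1) *
        grid_norm0_sq N (l / N) (\<lambda>i. f (real i * (l / N)) ((real j + \<sigma>) * (T / M)))"
      proof (rule levelA[where j=j and y=y and f=f and k=k and q=q and l=l and T=T and N=N and M=M and cK=c1 and \<alpha>=\<alpha> and \<sigma>=\<sigma>])
        fix i assume "1 \<le> i" "i \<le> N - 1"
        then show "frac_deriv \<alpha> \<sigma> (T / M) y j i =
          Lambda_op (l / N)
            (\<lambda>i'. k ((real i' - 1 / 2) * (l / N)) ((real j + \<sigma>) * (T / M)))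
            (\<lambda>i'. q (real i' * (l / N)) ((real j + \<sigma>) * (T / M)))
            (\<lambda>i'. \<sigma> * y (j + 1) i' + (1 - \<sigma>) * y j i') i
          + f (real i * (l / N)) ((real j + \<sigma>) * (T / M))" using scheme j by blast
      qed (use alpha sigma lT NM c1 k_ge q_ge bdry j in auto)
      have e2: "(\<lambda>i. f (real i * h) ((real (j + 1) - 1 + \<sigma>) * \<tau>)) = (\<lambda>i. f (real i * (l / N)) ((real j + \<sigma>) * (T / M)))"
        by (simp add: h_def \<tau>_def)
      show ?thesis using L unfolding e_def v_def \<Phi>_def e2 by (simp add: h_def \<tau>_def)
    qed
    have e0: "(1-\<alpha>) / (2 * (real j + \<sigma>) powr \<alpha>) \<le> e 0"
      using coef_last[OF alpha sigma, of j] by (simp add: e_def)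
    have jp: "0 < (real j + \<sigma>) powr \<alpha>" using sp by simp
    have e0p: "0 < e 0" using e0 jp alpha by (smt (verit) divide_pos_pos)
    have ejp: "0 < e j" using chain_mono[OF emono] e0p by simp
    have TT: "(real j + \<sigma>) powr \<alpha> * \<tau> powr \<alpha> \<le> T powr \<alpha>"
    proof -
      have "real j + \<sigma> \<le> real M" using j NM sp by linarith
      then have "(real j + \<sigma>) * \<tau> \<le> real M * \<tau>" using hp by (intro mult_right_mono) auto
      then have "(real j + \<sigma>) * \<tau> \<le> T" using NM by (simp add: \<tau>_def)
      then have "((real j + \<sigma>) * \<tau>) powr \<alpha> \<le> T powr \<alpha>" using sp hp alpha by (intro powr_mono2) auto
      then show ?thesis using sp hp by (simp add: powr_mult)
    qed
    have GR: "\<tau> powr \<alpha> * Gamma (2 - \<alpha>) * l^2 / (8 * c1) * \<Phi> (j+1) \<le> e 0 * R"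
    proof -
      define K where "K = l^2 * Gamma (1 - \<alpha>) / (8 * c1)"
      have Kp: "0 \<le> K" using G1 c1 by (simp add: K_def)
      have "\<tau> powr \<alpha> * Gamma (2 - \<alpha>) * l^2 / (8 * c1) * \<Phi> (j+1) = (1-\<alpha>) * \<tau> powr \<alpha> * K * \<Phi> (j+1)"
        by (simp add: G2 K_def)
      also have "\<dots> \<le> (1-\<alpha>) * \<tau> powr \<alpha> * K * \<Phi>m"
        using \<Phi>ge[of "j+1"] j NM alpha Kp hp by (intro mult_left_mono) auto
      also have "\<dots> = ((1-\<alpha>) / (2 * (real j + \<sigma>) powr \<alpha>)) * (2 * ((real j + \<sigma>) powr \<alpha> * \<tau> powr \<alpha>) * K * \<Phi>m)"
        using jp by (simp add: field_simps)
      also have "\<dots> \<le> e 0 * (2 * ((real j + \<sigma>) powr \<alpha> * \<tau> powr \<alpha>) * K * \<Phi>m)"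
        using e0 jp hp Kp \<Phi>mnn by (intro mult_right_mono) auto
      also have "\<dots> \<le> e 0 * (2 * T powr \<alpha> * K * \<Phi>m)"
        using TT e0p Kp \<Phi>mnn by (intro mult_left_mono mult_right_mono) auto
      also have "\<dots> = e 0 * R" by (simp add: R_def K_def)
      finally show ?thesis .
    qed
    have "e j * v (Suc j) \<le> e j * (v 0 + R)"
      using ab lev GR by (simp add: algebra_simps)
    then show "v (j+1) \<le> v 0 + R" using ejp by simp
  qed
  have all: "\<forall>s\<le>n. s \<le> M \<longrightarrow> v s \<le> v 0 + R" for n
  proof (induction n)
    case 0 then show ?case using Rnn by simp
  next
    case (Suc n)
    show ?case
    proof (intro allI impI)
      fix s assume s: "s \<le> Suc n" "s \<le> M"
      show "v s \<le> v 0 + R"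
      proof (cases "s = Suc n")
        case True
        have "v (n+1) \<le> v 0 + R"
          using step[of n] Suc.IH s True by auto
        then show ?thesis using True by simp
      next
        case False then show ?thesis using Suc.IH s by auto
      qed
    qed
  qed
  show ?thesis
  proof (intro allI impI)
    fix j assume j: "j \<le> M - 1"
    have "v (j+1) \<le> v 0 + R" using all[of "j+1"] j NM by simp
    moreover have "\<Phi>m = Max ((\<lambda>j'. grid_norm0_sq N (l / N)
                 (\<lambda>i. f (real i * (l / N)) ((real j' - 1 + \<sigma>) * (T / M)))) ` {1..M})"
      unfolding \<Phi>m_def \<Phi>_def h_def \<tau>_def ..
    ultimately show "grid_norm0_sq N (l / N) (y (j + 1)) \<le>
      grid_norm0_sq N (l / N) (y 0)
      + l^2 * T powr \<alpha> * Gamma (1 - \<alpha>) / (4 * c1) *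
        Max ((\<lambda>j'. grid_norm0_sq N (l / N)
                 (\<lambda>i. f (real i * (l / N)) ((real j' - 1 + \<sigma>) * (T / M)))) ` {1..M})"
      unfolding v_def R_def h_def by simp
  qed
qed


end
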